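(* Let $m\ge n$ be positive integers and set $$A_{m,n}=\sum_{i,j\ge1}p_{i+j}\,Q_{m-i}(\alpha)\,Q_{n-j}(\alpha)=\sum_\lambda b_\lambda q_\lambda(\alpha).$$ Then $b_\lambda=\big[m'(1-\delta_{m,m'})-n'\big]\alpha$ if $\lambda=(m',n')$ is a partition with at most two parts (with $n'\ge0$) satisfying $\lambda\ge(m,n)$ in dominance order, and $b_\lambda=0$ otherwise.
   Context: $F=\mathbb{Q}(\alpha)$, $\Lambda_F=F[p_1,p_2,\dots]$ with $p_n$ the power sums. For a partition $\lambda$, $l(\lambda)$ is its number of parts and $z_\lambda=\prod_i i^{m_i}m_i!$ with $m_i$ the multiplicity of $i$. $Q_n(\alpha)=\sum_{\lambda\vdash n}\alpha^{-l(\lambda)}z_\lambda^{-1}p_\lambda$ for $n\ge1$, $Q_0=1$, $Q_n=0$ for $n<0$; $q_\lambda=Q_{\lambda_1}Q_{\lambda_2}\cdots$ (a basis of $\Lambda_F$). Dominance order: $\lambda\ge\mu$ iff $|\lambda|=|\mu|$ and $\lambda_1+\dots+\lambda_i\ge\mu_1+\dots+\mu_i$ for all $i$. (In the paper $A_{m,n}$ is written as $\sum_{i,j\ge1}h_{-(i+j)}(h_i.Q_m)(h_j.Q_n)$ with $h_{-k}$ multiplication by $p_k$ and $h_k=k\alpha\,\partial/\partial p_k$, which satisfy $h_i.Q_m=Q_{m-i}$.) *)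

theory Defs
  imports Main "HOL-Library.Poly_Mapping" "HOL-Computational_Algebra.Polynomial"
    "HOL-Computational_Algebra.Fraction_Field"
begin

type_synonym F = "rat poly fract"

definition alpha :: F where
  "alpha = Fract [:0, 1:] 1"

text \<open>Lambda_F = F[p_1, p_2, ...]: polynomials in countably many variables p_k,
  monomials are finitely supported exponent vectors (finitely supported nat to nat maps).\<close>
type_synonym Lam = "(nat \<Rightarrow>\<^sub>0 nat) \<Rightarrow>\<^sub>0 F"

definition const :: "F \<Rightarrow> Lam" where
  "const c = Poly_Mapping.single 0 c"

definition p :: "nat \<Rightarrow> Lam" where
  "p k = Poly_Mapping.single (Poly_Mapping.single k 1) 1"

definition partitions :: "nat \<Rightarrow> nat list set" where
  "partitions N = {ls. sorted_wrt (\<ge>) ls \<and> (\<forall>x\<in>set ls. 0 < x) \<and> sum_list ls = N}"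

definition p_part :: "nat list \<Rightarrow> Lam" where
  "p_part lam = prod_list (map p lam)"

definition z :: "nat list \<Rightarrow> nat" where
  "z lam = (\<Prod>i\<in>set lam. i ^ count_list lam i * fact (count_list lam i))"

definition Q :: "int \<Rightarrow> Lam" where
  "Q k = (if k < 0 then 0 else if k = 0 then 1 else
     (\<Sum>lam\<in>partitions (nat k).
        const (inverse (alpha ^ length lam) / of_nat (z lam)) * p_part lam))"

definition q :: "nat list \<Rightarrow> Lam" where
  "q lam = prod_list (map (\<lambda>k. Q (int k)) lam)"

text \<open>Dominance order on partitions (trailing zeros irrelevant).\<close>
definition dominates :: "nat list \<Rightarrow> nat list \<Rightarrow> bool" where
  "dominates lam mu \<longleftrightarrow> sum_list lam = sum_list mu \<and>
     (\<forall>i. sum_list (take i mu) \<le> sum_list (take i lam))"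

text \<open>A_{m,n}; terms with i > m or j > n vanish since Q_k = 0 for k < 0.\<close>
definition A :: "nat \<Rightarrow> nat \<Rightarrow> Lam" where
  "A m n = (\<Sum>i\<in>{1..m}. \<Sum>j\<in>{1..n}. p (i + j) * Q (int m - int i) * Q (int n - int j))"

text \<open>The claimed coefficient b_lambda; lambda = (m', n') with n' = 0 allowed.\<close>
definition b :: "nat \<Rightarrow> nat \<Rightarrow> nat list \<Rightarrow> F" where
  "b m n lam = (if length lam \<le> 2 \<and> dominates lam [m, n] then
     (let m' = (lam @ [0, 0]) ! 0; n' = (lam @ [0, 0]) ! 1 in
       (of_nat m' * (if m = m' then 0 else 1) - of_nat n') * alpha)
     else 0)"

end

theory Submission
  imports Defs "HOL-Library.Multiset"
begin


lemma alpha_nz: "alpha \<noteq> 0"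
  unfolding alpha_def by (simp add: Zero_fract_def eq_fract)

lemma const_mult: "const (x * y) = const x * const y"
  unfolding const_def by (simp add: mult_single)
lemma const_add: "const (x + y) = const x + const y"
  unfolding const_def by (simp add: single_add)
lemma const_diff: "const (x - y) = const x - const y"
  unfolding const_def by (simp add: single_diff)
lemma const_0[simp]: "const 0 = 0" unfolding const_def by simp
lemma const_1[simp]: "const 1 = 1" unfolding const_def by simp
lemma const_sum: "const (sum f S) = (\<Sum>x\<in>S. const (f x))"
  by (induction S rule: infinite_finite_induct) (auto simp: const_add)

definition ins :: "nat \<Rightarrow> nat list \<Rightarrow> nat list" where
  "ins k mu = rev (insort k (rev mu))"

lemma sorted_ge_rev: "sorted_wrt (\<ge>) xs \<longleftrightarrow> sorted (rev xs)"
  by (simp add: sorted_wrt_rev)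

lemma sorted_ge_eq:
  assumes "sorted_wrt (\<ge>) (xs::nat list)" "sorted_wrt (\<ge>) ys" "mset xs = mset ys"
  shows "xs = ys"
proof -
  have "sort (rev ys) = rev xs" using assms
    by (intro properties_for_sort) (simp_all add: sorted_ge_rev)
  moreover have "sort (rev ys) = rev ys" using assms
    by (intro properties_for_sort) (simp_all add: sorted_ge_rev)
  ultimately show ?thesis by simp
qed

lemma sorted_wrt_remove1: "sorted_wrt P xs \<Longrightarrow> sorted_wrt P (remove1 x xs)"
  by (induction xs) (auto dest: set_mp[OF set_remove1_subset])

lemma ins_sorted: "sorted_wrt (\<ge>) mu \<Longrightarrow> sorted_wrt (\<ge>) (ins k mu)"
  unfolding ins_def sorted_ge_rev by (simp add: sorted_insort)

lemma mset_ins[simp]: "mset (ins k mu) = add_mset k (mset mu)"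
  unfolding ins_def by simp

lemma set_ins[simp]: "set (ins k mu) = insert k (set mu)"
  by (metis mset_ins set_mset_mset set_mset_add_mset_insert)

lemma pos_iff: "(\<forall>x\<in>set ls. 0 < (x::nat)) \<longleftrightarrow> 0 \<notin> set ls"
  by (induction ls) auto

lemma part_iff: "ls \<in> partitions N \<longleftrightarrow> sorted_wrt (\<ge>) ls \<and> 0 \<notin> set ls \<and> sum_list ls = N"
  unfolding partitions_def pos_iff by auto

lemma sum_list_rem: "k \<in> set (ls::nat list) \<Longrightarrow> sum_list (remove1 k ls) = sum_list ls - k"
  by (induction ls) (auto simp: member_le_sum_list)

lemma length_le_sum: "0 \<notin> set ls \<Longrightarrow> length ls \<le> sum_list (ls::nat list)"
  by (induction ls) (auto simp: Suc_le_eq)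

lemma finite_partitions: "finite (partitions N)"
proof -
  have "partitions N \<subseteq> {xs. set xs \<subseteq> {..N} \<and> length xs \<le> N}"
    using length_le_sum member_le_sum_list by (fastforce simp: part_iff)
  then show ?thesis by (rule finite_subset) (rule finite_lists_length_le, simp)
qed

lemma sum_list_mset: "sum_list xs = sum_mset (mset xs)"
  by (simp add: sum_mset_sum_list)

lemma ins_part: "mu \<in> partitions (N - k) \<Longrightarrow> 1 \<le> k \<Longrightarrow> k \<le> N \<Longrightarrow> ins k mu \<in> partitions N"
  unfolding part_iff using ins_sorted by (auto simp: sum_list_mset)

lemma rem_part: "lam \<in> partitions N \<Longrightarrow> k \<in> set lam \<Longrightarrow> remove1 k lam \<in> partitions (N - k)"
  unfolding part_iff
  by (auto simp: sorted_wrt_remove1 sum_list_rem dest: set_mp[OF set_remove1_subset])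

lemma rem_ins: "sorted_wrt (\<ge>) mu \<Longrightarrow> remove1 k (ins k mu) = mu"
  by (rule sorted_ge_eq) (auto intro: sorted_wrt_remove1 ins_sorted)

lemma ins_rem: "sorted_wrt (\<ge>) lam \<Longrightarrow> k \<in> set lam \<Longrightarrow> ins k (remove1 k lam) = lam"
  by (rule sorted_ge_eq) (auto intro: sorted_wrt_remove1 ins_sorted)

lemma p_part_rem: "k \<in> set lam \<Longrightarrow> p_part lam = p k * p_part (remove1 k lam)"
  by (induction lam) (auto simp: p_part_def mult_ac)

lemma z_alt: "finite S \<Longrightarrow> set lam \<subseteq> S \<Longrightarrow>
  z lam = (\<Prod>i\<in>S. i ^ count (mset lam) i * fact (count (mset lam) i))"
  unfolding z_def count_mset
  by (rule prod.mono_neutral_left) (auto simp: count_list_0_iff)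

lemma z_rem: assumes "k \<in> set lam"
  shows "z lam = k * count_list lam k * z (remove1 k lam)"
proof -
  let ?S = "set lam"
  have f: "finite ?S" by simp
  have c: "count (mset lam) k \<ge> 1" using assms by (simp add: Suc_le_eq)
  have "z lam = (k ^ count (mset lam) k * fact (count (mset lam) k)) *
     (\<Prod>i\<in>?S - {k}. i ^ count (mset lam) i * fact (count (mset lam) i))"
    using z_alt[OF f order_refl] assms by (simp add: prod.remove)
  moreover have "z (remove1 k lam) = (k ^ (count (mset lam) k - 1) * fact (count (mset lam) k - 1)) *
     (\<Prod>i\<in>?S - {k}. i ^ count (mset lam) i * fact (count (mset lam) i))"
    using z_alt[OF f, of "remove1 k lam"] set_remove1_subset[of k lam] assms by (simp add: prod.remove)
  moreover have "k ^ count (mset lam) k * fact (count (mset lam) k) =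
     k * count (mset lam) k * (k ^ (count (mset lam) k - 1) * fact (count (mset lam) k - 1))"
    using c by (cases "count (mset lam) k") (auto simp: fact_Suc algebra_simps)
  ultimately show ?thesis by (simp add: count_mset)
qed

lemma z_pos: "0 \<notin> set lam \<Longrightarrow> z lam > 0"
  unfolding z_def by (rule prod_pos) (auto intro: gr0I)

lemma of_nat_F_eq0: "(of_nat k :: F) = 0 \<longleftrightarrow> k = 0"
  by (simp add: of_nat_fract Zero_fract_def eq_fract)

definition cc :: "nat list \<Rightarrow> Lam" where
  "cc lam = const (inverse (alpha ^ length lam) / of_nat (z lam))"

lemma partitions_0: "partitions 0 = {[]}"
  unfolding partitions_def by (auto simp: pos_iff) (metis list.set_sel(1))

lemma Q_nat: "Q (int j) = (\<Sum>lam\<in>partitions j. cc lam * p_part lam)"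
  by (cases "j = 0") (simp_all add: Q_def cc_def partitions_0 z_def p_part_def)

lemma Q_neg: "k < 0 \<Longrightarrow> Q k = 0" by (simp add: Q_def)

lemma newton_local:
  assumes lam: "lam \<in> partitions N"
  shows "(\<Sum>k\<in>set lam. p k * (cc (remove1 k lam) * p_part (remove1 k lam)))
       = const (alpha * of_nat N) * (cc lam * p_part lam)"
proof -
  define X where "X = inverse (alpha ^ length lam) / of_nat (z lam)"
  have pos: "0 \<notin> set lam" using lam by (simp add: part_iff)
  have tm: "p k * (cc (remove1 k lam) * p_part (remove1 k lam))
      = const (alpha * of_nat (k * count_list lam k) * X) * p_part lam" if k: "k \<in> set lam" for k
  proof -
    have zr: "z lam = k * count_list lam k * z (remove1 k lam)" by (rule z_rem[OF k])
    have pr: "0 < z (remove1 k lam)" using pos by (intro z_pos) (auto dest: set_mp[OF set_remove1_subset])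
    have pl: "0 < z lam" using pos by (intro z_pos)
    have len: "length lam = Suc (length (remove1 k lam))" using k by (simp add: length_remove1)
         (metis Suc_pred length_pos_if_in_set)
    have "inverse (alpha ^ length (remove1 k lam)) / of_nat (z (remove1 k lam))
        = alpha * of_nat (k * count_list lam k) * X"
      unfolding X_def len zr using pr pl alpha_nz zr
      by (simp add: of_nat_F_eq0 field_simps)
    then show ?thesis
      unfolding cc_def p_part_rem[OF k] by (simp add: mult_ac)
  qed
  have "(\<Sum>k\<in>set lam. p k * (cc (remove1 k lam) * p_part (remove1 k lam)))
      = (\<Sum>k\<in>set lam. const (alpha * of_nat (k * count_list lam k) * X) * p_part lam)"
    by (rule sum.cong) (simp_all add: tm)
  also have "\<dots> = const (\<Sum>k\<in>set lam. alpha * of_nat (k * count_list lam k) * X) * p_part lam"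
    by (simp add: const_sum sum_distrib_right)
  also have "(\<Sum>k\<in>set lam. alpha * of_nat (k * count_list lam k) * X) = alpha * X * of_nat (\<Sum>k\<in>set lam. count_list lam k * k)"
    by (simp add: sum_distrib_left sum_distrib_right mult_ac)
  also have "(\<Sum>k\<in>set lam. count_list lam k * k) = N"
    using sum_list_map_eq_sum_count[of "\<lambda>x. x" lam] lam by (simp add: part_iff)
  finally have "(\<Sum>k\<in>set lam. p k * (cc (remove1 k lam) * p_part (remove1 k lam)))
      = const (alpha * X * of_nat N) * p_part lam" .
  also have "const (alpha * X * of_nat N) = const (alpha * of_nat N) * cc lam"
    unfolding cc_def X_def const_mult[symmetric] by (simp add: mult_ac)
  finally show ?thesis by (simp add: mult_ac)
qed

lemma newton_nat:
  "(\<Sum>k\<in>{1..N}. p k * Q (int N - int k)) = const (alpha * of_nat N) * Q (int N)"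
proof -
  have "(\<Sum>k\<in>{1..N}. p k * Q (int N - int k))
     = (\<Sum>k\<in>{1..N}. \<Sum>mu\<in>partitions (N - k). p k * (cc mu * p_part mu))"
  proof (rule sum.cong)
    fix k assume "k \<in> {1..N}"
    then have "int N - int k = int (N - k)" by simp
    then show "p k * Q (int N - int k) = (\<Sum>mu\<in>partitions (N - k). p k * (cc mu * p_part mu))"
      by (simp only: Q_nat sum_distrib_left)
  qed simp
  also have "\<dots> = (\<Sum>(k,mu)\<in>Sigma {1..N} (\<lambda>k. partitions (N - k)). p k * (cc mu * p_part mu))"
    by (rule sum.Sigma) (simp_all add: finite_partitions)
  also have "\<dots> = (\<Sum>(lam,k)\<in>Sigma (partitions N) set. p k * (cc (remove1 k lam) * p_part (remove1 k lam)))"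
  proof (rule sum.reindex_bij_witness[where i = "\<lambda>(lam,k). (k, remove1 k lam)" and j = "\<lambda>(k,mu). (ins k mu, k)"])
    fix a assume "a \<in> Sigma {1..N} (\<lambda>k. partitions (N - k))"
    then obtain k mu where a: "a = (k,mu)" "1 \<le> k" "k \<le> N" "mu \<in> partitions (N - k)" by auto
    then have s: "sorted_wrt (\<ge>) mu" by (simp add: part_iff)
    show "(case case a of (k, mu) \<Rightarrow> (ins k mu, k) of (lam, k) \<Rightarrow> (k, remove1 k lam)) = a"
      using a s by (simp add: rem_ins)
    show "(case a of (k, mu) \<Rightarrow> (ins k mu, k)) \<in> Sigma (partitions N) set"
      using a by (simp add: ins_part)
    show "(case case a of (k, mu) \<Rightarrow> (ins k mu, k) of (lam, k) \<Rightarrow> p k * (cc (remove1 k lam) * p_part (remove1 k lam))) =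
         (case a of (k, mu) \<Rightarrow> p k * (cc mu * p_part mu))"
      using a s by (simp add: rem_ins)
  next
    fix c assume "c \<in> Sigma (partitions N) set"
    then obtain lam k where c: "c = (lam,k)" "lam \<in> partitions N" "k \<in> set lam" by auto
    then have s: "sorted_wrt (\<ge>) lam" "0 \<notin> set lam" "sum_list lam = N" by (simp_all add: part_iff)
    show "(case case c of (lam, k) \<Rightarrow> (k, remove1 k lam) of (k, mu) \<Rightarrow> (ins k mu, k)) = c"
      using c s by (simp add: ins_rem)
    have "(k::nat) \<noteq> 0"
    proof
      assume "k = 0"
      with c(3) s(2) show False by simp
    qed
    then have "1 \<le> k" by simp
    moreover have "k \<le> N" using member_le_sum_list[OF c(3)] s(3) by simp
    ultimately show "(case c of (lam, k) \<Rightarrow> (k, remove1 k lam)) \<in> Sigma {1..N} (\<lambda>k. partitions (N - k))"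
      using c by (simp add: rem_part)
  qed
  also have "\<dots> = (\<Sum>lam\<in>partitions N. \<Sum>k\<in>set lam. p k * (cc (remove1 k lam) * p_part (remove1 k lam)))"
    by (rule sum.Sigma[symmetric]) (simp_all add: finite_partitions)
  also have "\<dots> = (\<Sum>lam\<in>partitions N. const (alpha * of_nat N) * (cc lam * p_part lam))"
    by (rule sum.cong) (simp_all add: newton_local)
  also have "\<dots> = const (alpha * of_nat N) * Q (int N)"
    by (simp add: Q_nat sum_distrib_left)
  finally show ?thesis .
qed



lemma newton_int:
  assumes "0 \<le> a" "a \<le> int K"
  shows "(\<Sum>k\<in>{1..K}. p k * Q (a - int k)) = const (alpha * of_int a) * Q a"
proof -
  obtain N where a: "a = int N" using assms(1) nonneg_int_cases by blast
  have NK: "N \<le> K" using assms a by simp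
  have "(\<Sum>k\<in>{1..K}. p k * Q (a - int k)) = (\<Sum>k\<in>{1..N}. p k * Q (a - int k))"
    by (rule sum.mono_neutral_right) (auto simp: a NK Q_neg)
  also have "\<dots> = const (alpha * of_nat N) * Q (int N)" using newton_nat[of N] a by simp
  finally show ?thesis using a by simp
qed

definition V :: "int \<Rightarrow> int \<Rightarrow> nat \<Rightarrow> Lam" where
  "V a bb K = (\<Sum>i\<in>{1..K}. \<Sum>j\<in>{1..K}. p (i+j) * Q (a - int i) * Q (bb - int j))"

lemma shift1: "(\<Sum>i\<in>{1..Suc n}. f i) = (\<Sum>i\<in>{0..n}. f (Suc i))"
  using sum.shift_bounds_cl_Suc_ivl[of f 0 n] by simp

lemma V_step:
  assumes "0 \<le> a" "1 \<le> bb" "a < int K" "bb \<le> int K"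
  shows "V a bb K - V (a+1) (bb-1) K =
     const (alpha * of_int (a+1)) * Q (a+1) * Q (bb-1) - const (alpha * of_int bb) * Q a * Q bb"
proof -
  obtain K' where K: "K = Suc K'" using assms by (cases K) auto
  define g where "g i j = p (i+j) * Q (a - int i) * Q (bb - int j)" for i j
  define R where "R i = (\<Sum>j\<in>{1..K}. g i j)" for i
  have V1: "V a bb K = (\<Sum>i\<in>{0..K'}. R (Suc i))"
    unfolding V_def R_def g_def K by (rule shift1)
  have V2: "V (a+1) (bb-1) K = (\<Sum>i\<in>{0..K'}. \<Sum>j\<in>{1..K}. g i (Suc j))"
    unfolding V_def K shift1
    by (intro sum.cong refl) (simp add: g_def algebra_simps)
  have R': "(\<Sum>j\<in>{1..K}. g i (Suc j)) = R i - g i 1" for i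
  proof -
    have "(\<Sum>j\<in>{1..K}. g i (Suc j) - g i j) = g i (Suc K) - g i 1" by (rule sum_Suc_diff) simp
    moreover have "g i (Suc K) = 0" unfolding g_def using assms by (simp add: Q_neg)
    ultimately show ?thesis by (simp add: sum_subtractf R_def eq_diff_eq diff_eq_eq)
  qed
  have V3: "V (a+1) (bb-1) K = (\<Sum>i\<in>{0..K'}. R i - g i 1)" using V2 R' by simp
  have "V a bb K - V (a+1) (bb-1) K = (\<Sum>i\<in>{0..K'}. R (Suc i)) - (\<Sum>i\<in>{0..K'}. R i - g i 1)"
    by (simp only: V1 V3)
  also have "\<dots> = (\<Sum>i\<in>{0..K'}. R (Suc i) - R i) + (\<Sum>i\<in>{0..K'}. g i 1)"
    by (simp add: sum_subtractf)
  also have "(\<Sum>i\<in>{0..K'}. R (Suc i) - R i) = R K - R 0" by (subst sum_Suc_diff) (simp_all add: K)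
  also have "R K = 0" unfolding R_def g_def using assms by (simp add: Q_neg)
  also have "R 0 = Q a * (const (alpha * of_int bb) * Q bb)"
  proof -
    have "R 0 = Q a * (\<Sum>j\<in>{1..K}. p j * Q (bb - int j))"
      unfolding R_def g_def by (simp add: sum_distrib_left mult_ac)
    then show ?thesis using newton_int[of bb K] assms by simp
  qed
  also have "(\<Sum>i\<in>{0..K'}. g i 1) = Q (bb-1) * (const (alpha * of_int (a+1)) * Q (a+1))"
  proof -
    have "(\<Sum>i\<in>{0..K'}. g i 1) = Q (bb-1) * (\<Sum>i\<in>{0..K'}. p (Suc i) * Q (a + 1 - int (Suc i)))"
      unfolding g_def by (simp add: sum_distrib_left mult_ac)
    also have "(\<Sum>i\<in>{0..K'}. p (Suc i) * Q (a + 1 - int (Suc i))) = (\<Sum>k\<in>{1..K}. p k * Q (a + 1 - int k))"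
      unfolding K by (rule shift1[symmetric])
    also have "\<dots> = const (alpha * of_int (a+1)) * Q (a+1)"
      using newton_int[of "a+1" K] assms by simp
    finally show ?thesis .
  qed
  finally show ?thesis by (simp add: algebra_simps)
qed



lemma A_V:
  assumes "1 \<le> n"
  shows "A m n = V (int m) (int n) (m + n)"
proof -
  let ?K = "m + n"
  have inner: "(\<Sum>j\<in>{1..n}. p (i + j) * Q (int m - int i) * Q (int n - int j))
      = (\<Sum>j\<in>{1..?K}. p (i + j) * Q (int m - int i) * Q (int n - int j))" for i
    by (rule sum.mono_neutral_left) (auto simp: Q_neg)
  have "A m n = (\<Sum>i\<in>{1..m}. \<Sum>j\<in>{1..?K}. p (i + j) * Q (int m - int i) * Q (int n - int j))"
    unfolding A_def inner ..
  also have "\<dots> = (\<Sum>i\<in>{1..?K}. \<Sum>j\<in>{1..?K}. p (i + j) * Q (int m - int i) * Q (int n - int j))"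
    by (rule sum.mono_neutral_left) (auto simp: Q_neg)
  finally show ?thesis unfolding V_def .
qed

lemma V_end: "V a 0 K = 0"
  unfolding V_def by (simp add: Q_neg)

definition T :: "nat \<Rightarrow> nat \<Rightarrow> nat \<Rightarrow> Lam" where
  "T m n r = const (alpha * of_nat (m + r)) * Q (int (m + r)) * Q (int (n - r))"
definition Y :: "nat \<Rightarrow> nat \<Rightarrow> nat \<Rightarrow> Lam" where
  "Y m n r = const (alpha * of_nat (n - r)) * Q (int (m + r)) * Q (int (n - r))"

lemma A_tele:
  assumes "1 \<le> n"
  shows "A m n = (\<Sum>r<n. T m n (Suc r) - Y m n r)"
proof -
  let ?K = "m + n"
  define W where "W r = V (int m + int r) (int n - int r) ?K" for r
  have "A m n = W 0 - W n" unfolding W_def using A_V[OF assms] V_end by simp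
  also have "\<dots> = (\<Sum>r<n. W r - W (Suc r))" by (rule sum_lessThan_telescope'[symmetric])
  also have "\<dots> = (\<Sum>r<n. T m n (Suc r) - Y m n r)"
  proof (rule sum.cong[OF refl])
    fix r assume r: "r \<in> {..<n}"
    have e1: "int m + int (Suc r) = (int m + int r) + 1" by simp
    have e2: "int n - int (Suc r) = (int n - int r) - 1" by simp
    have "W r - W (Suc r) = const (alpha * of_int (int m + int r + 1)) * Q (int m + int r + 1) * Q (int n - int r - 1)
       - const (alpha * of_int (int n - int r)) * Q (int m + int r) * Q (int n - int r)"
      unfolding W_def e1 e2 using r by (intro V_step) auto
    also have "\<dots> = T m n (Suc r) - Y m n r"
      using r unfolding T_def Y_def by (simp add: of_nat_diff algebra_simps)
    finally show "W r - W (Suc r) = T m n (Suc r) - Y m n r" .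
  qed
  finally show ?thesis .
qed



lemma A_closed:
  assumes "1 \<le> n"
  shows "A m n = T m n n - T m n 0 + (\<Sum>r<n. T m n r - Y m n r)"
proof -
  have "A m n = (\<Sum>r<n. (T m n (Suc r) - T m n r) + (T m n r - Y m n r))"
    unfolding A_tele[OF assms] by simp
  also have "\<dots> = (\<Sum>r<n. T m n (Suc r) - T m n r) + (\<Sum>r<n. T m n r - Y m n r)"
    by (rule sum.distrib)
  finally show ?thesis by (simp add: sum_lessThan_telescope)
qed

lemma dom_two:
  assumes "r < n"
  shows "dominates [m+r, n-r] [m,n]"
  unfolding dominates_def
proof (intro conjI allI)
  show "sum_list [m + r, n - r] = sum_list [m, n]" using assms by simp
  fix i show "sum_list (take i [m, n]) \<le> sum_list (take i [m + r, n - r])"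
    using assms by (cases i; cases "i - 1") auto
qed

lemma dom_one: "dominates [m+n] [m,n]"
  unfolding dominates_def
proof (intro conjI allI)
  show "sum_list [m + n] = sum_list [m, n]" by simp
  fix i show "sum_list (take i [m, n]) \<le> sum_list (take i [m + n])"
    by (cases i; cases "i - 1") auto
qed

lemma char_lam:
  assumes lam: "lam \<in> partitions (m+n)" and bz: "b m n lam \<noteq> 0" and n: "1 \<le> n"
  shows "lam \<in> (\<lambda>r. [m+r, n-r]) ` {..<n} \<union> {[m+n]}"
proof -
  have l2: "length lam \<le> 2" and dm: "dominates lam [m,n]" using bz by (auto simp: b_def split: if_splits)
  have pl: "0 \<notin> set lam" "sum_list lam = m + n" using lam by (simp_all add: part_iff)
  have t1: "sum_list (take 1 [m,n]) \<le> sum_list (take 1 lam)" using dm unfolding dominates_def by blast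
  show ?thesis
  proof (cases lam)
    case Nil then show ?thesis using pl n by simp
  next
    case (Cons x xs)
    show ?thesis
    proof (cases xs)
      case Nil then show ?thesis using Cons pl by simp
    next
      case (Cons y ys)
      then have ys: "ys = []" using l2 \<open>lam = x # xs\<close> by simp
      have xy: "x + y = m + n" "y \<noteq> 0" "m \<le> x"
        using pl t1 \<open>lam = x # xs\<close> Cons ys by auto
      then have "lam = [m + (x - m), n - (x - m)]" "x - m < n"
        using \<open>lam = x # xs\<close> Cons ys by auto
      then show ?thesis by blast
    qed
  qed
qed

lemma two_part: "n \<le> m \<Longrightarrow> r < n \<Longrightarrow> [m+r, n-r] \<in> partitions (m+n)"
  unfolding part_iff by auto

lemma one_part: "1 \<le> n \<Longrightarrow> [m+n] \<in> partitions (m+n)"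
  unfolding part_iff by auto

lemma const_neg: "const (- x) = - const x"
  using const_diff[of 0 x] by simp

lemma term_two:
  assumes "r < n"
  shows "const (b m n [m+r, n-r]) * q [m+r, n-r] = T m n r - Y m n r - (if r = 0 then T m n 0 else 0)"
proof -
  have bv: "b m n [m+r,n-r] = (of_nat (m+r) * (if r = 0 then 0 else 1) - of_nat (n-r)) * alpha"
    unfolding b_def using dom_two[OF assms, of m] by (simp add: Let_def)
  show ?thesis
  proof (cases "r = 0")
    case True
    then have bv': "b m n [m, n] = - (alpha * of_nat n)" using bv by simp
    show ?thesis using True
      by (simp add: bv' q_def T_def Y_def const_neg mult_ac)
  next
    case False then show ?thesis
      by (simp add: bv q_def T_def Y_def const_diff algebra_simps)
  qed
qed

lemma term_one:
  assumes "1 \<le> n"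
  shows "const (b m n [m+n]) * q [m+n] = T m n n"
proof -
  have "b m n [m+n] = of_nat (m+n) * alpha"
    unfolding b_def using dom_one[of m n] assms by (simp add: Let_def)
  moreover have "Q 0 = 1" by (simp add: Q_def)
  ultimately show ?thesis by (simp add: q_def T_def mult_ac)
qed

theorem lemma3p8:
  fixes m n :: nat
  assumes "1 \<le> n" and "n \<le> m"
  shows "A m n = (\<Sum>lam\<in>partitions (m + n). const (b m n lam) * q lam)"
proof -
  let ?L = "(\<lambda>r. [m+r, n-r]) ` {..<n}"
  let ?f = "\<lambda>lam. const (b m n lam) * q lam"
  have sub: "?L \<union> {[m+n]} \<subseteq> partitions (m+n)"
    using two_part[OF assms(2)] one_part[OF assms(1)] by auto
  have "(\<Sum>lam\<in>partitions (m + n). ?f lam) = (\<Sum>lam\<in>?L \<union> {[m+n]}. ?f lam)"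
  proof (rule sum.mono_neutral_right[OF finite_partitions sub])
    show "\<forall>lam\<in>partitions (m + n) - (?L \<union> {[m + n]}). ?f lam = 0"
      using char_lam assms(1) by fastforce
  qed
  also have "\<dots> = (\<Sum>lam\<in>?L. ?f lam) + ?f [m+n]"
    by (subst sum.union_disjoint) auto
  also have "(\<Sum>lam\<in>?L. ?f lam) = (\<Sum>r<n. ?f [m+r, n-r])"
    by (subst sum.reindex) (auto simp: inj_on_def)
  also have "\<dots> = (\<Sum>r<n. T m n r - Y m n r - (if r = 0 then T m n 0 else 0))"
    by (rule sum.cong) (simp_all add: term_two)
  also have "\<dots> = (\<Sum>r<n. T m n r - Y m n r) - T m n 0"
    using assms(1) by (simp add: sum_subtractf)
  finally show ?thesis using A_closed[OF assms(1)] term_one[OF assms(1)] by simp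
qed

end
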